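(* Let $0<\gamma<\frac12$ and define on $[0,\frac12)$ the function $g(\epsilon)=3\lambda(4,\epsilon)-4\gamma\log_2(1-2\epsilon)$, where $\lambda(4,\epsilon)=1+\frac13\log_2\big(\epsilon^4+(1-\epsilon)^4\big)$. Then $\min_{0\le\epsilon<\frac12}g(\epsilon)=\psi(4,\gamma)+2h(\gamma)$. Furthermore $g$ is unimodal, decreasing up to its global minimum point $\epsilon_0$ and increasing afterwards, where $\epsilon_0$ is determined by $\gamma=\big(\tfrac12-\epsilon\big)\cdot\frac{(1-\epsilon)^3-\epsilon^3}{(1-\epsilon)^4+\epsilon^4}$.
   Context: $h(t)=t\log_2\frac1t+(1-t)\log_2\frac1{1-t}$. $L_i=\{x\in\{0,1\}^n:|x|=i\}$. $\psi(4,\gamma)=\lim_{n\to\infty}\frac1n\log_2\big|\{(u_1,\dots,u_4)\in L_{\gamma n}^4: u_1+u_2+u_3+u_4=0\}\big|-2h(\gamma)$ (limit over $n$ with $\gamma n$ integer). *)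

theory Defs
  imports "HOL-Analysis.Analysis"
begin

definition h :: "real \<Rightarrow> real" where
  "h t = t * log 2 (1 / t) + (1 - t) * log 2 (1 / (1 - t))"

text \<open>Vectors of {0,1}^n are represented by their supports (subsets of {..<n});
  addition over GF(2) is symmetric difference; Hamming weight is cardinality.\<close>
definition layer :: "nat \<Rightarrow> nat \<Rightarrow> nat set set" where
  "layer n i = {x. x \<subseteq> {..<n} \<and> card x = i}"

definition vadd :: "nat set \<Rightarrow> nat set \<Rightarrow> nat set" where
  "vadd x y = (x - y) \<union> (y - x)"

definition count4 :: "nat \<Rightarrow> nat \<Rightarrow> nat" where
  "count4 n i = card {(u1, u2, u3, u4). u1 \<in> layer n i \<and> u2 \<in> layer n i \<and>
      u3 \<in> layer n i \<and> u4 \<in> layer n i \<and> vadd (vadd (vadd u1 u2) u3) u4 = {}}"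

definition int_mult_filter :: "real \<Rightarrow> nat filter" where
  "int_mult_filter \<gamma> = inf sequentially (principal {n. \<gamma> * real n \<in> \<int>})"

text \<open>\<psi>(4,\<gamma>) + 2h(\<gamma>) is the limit of this sequence along int_mult_filter \<gamma>.\<close>
definition psi_seq :: "real \<Rightarrow> nat \<Rightarrow> real" where
  "psi_seq \<gamma> n = log 2 (real (count4 n (nat \<lfloor>\<gamma> * real n\<rfloor>))) / real n - 2 * h \<gamma>"

definition lambda4 :: "real \<Rightarrow> real" where
  "lambda4 e = 1 + (1/3) * log 2 (e ^ 4 + (1 - e) ^ 4)"

definition g :: "real \<Rightarrow> real \<Rightarrow> real" where
  "g \<gamma> e = 3 * lambda4 e - 4 * \<gamma> * log 2 (1 - 2 * e)"

end

theory Submission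
  imports Defs "HOL-Library.FuncSet"
begin

definition Zt :: "real \<Rightarrow> real" where "Zt t = 1 + 6*t^2 + t^4"
definition Phi :: "real \<Rightarrow> real" where "Phi t = (3*t^2 + t^4) / Zt t"
definition Gt :: "real \<Rightarrow> real \<Rightarrow> real" where "Gt \<gamma> t = log 2 (Zt t) - 4*\<gamma>*log 2 t"

lemma Zt_pos: "Zt t > 0"
  unfolding Zt_def by (simp add: add_pos_nonneg)

lemma Phi_mono:
  assumes "0 \<le> x" "x < y" shows "Phi x < Phi y"
proof -
  define u where "u = x^2"
  define v where "v = y^2"
  have uv: "0 \<le> u" "u < v" using assms unfolding u_def v_def by (auto intro: power_strict_mono)
  have Zx: "Zt x = 1 + 6*u + u^2" and Zy: "Zt y = 1 + 6 * v + v^2"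
    unfolding Zt_def u_def v_def by (simp_all add: power_mult[symmetric])
  have nx: "3*x^2+x^4 = 3*u+u^2" and ny: "3*y^2+y^4 = 3 * v+v^2"
    unfolding u_def v_def by (simp_all add: power_mult[symmetric])
  have key: "(3 * v+v^2)*(1+6*u+u^2) - (3*u+u^2)*(1+6 * v+v^2) = (v-u)*(3+u+v+3*u * v)"
    by (simp add: algebra_simps power2_eq_square)
  have "3*u * v \<ge> 0" using uv by simp
  hence "3+u+v+3*u * v > 0" using uv by linarith
  hence "(v-u)*(3+u+v+3*u * v) > 0" using uv by (intro mult_pos_pos) auto
  hence "(3*u+u^2)*(1+6 * v+v^2) < (3 * v+v^2)*(1+6*u+u^2)" using key by linarith
  moreover have "1+6*u+u^2 > 0" "1+6 * v+v^2 > 0" using uv by (auto intro: add_pos_nonneg)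
  ultimately show ?thesis unfolding Phi_def using Zx Zy nx ny
    by (simp add: divide_less_eq less_divide_eq mult.commute)
qed

lemma Phi_0: "Phi 0 = 0" and Phi_1: "Phi 1 = 1/2"
  unfolding Phi_def Zt_def by simp_all

lemma Phi_cont: "continuous_on A Phi"
proof -
  have "continuous_on A Zt" unfolding Zt_def by (intro continuous_intros)
  moreover have "\<forall>t. Zt t \<noteq> 0" using Zt_pos by (metis less_irrefl)
  ultimately show ?thesis unfolding Phi_def by (intro continuous_intros) auto
qed

lemma g_eq:
  assumes "0 \<le> e" "e < 1/2" shows "g \<gamma> e = Gt \<gamma> (1 - 2*e)"
proof -
  have "e^4 + (1-e)^4 = Zt (1-2*e) / 8" unfolding Zt_def by (simp add: algebra_simps power2_eq_square power4_eq_xxxx)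
  moreover have "log 2 (Zt (1-2*e) / 8) = log 2 (Zt (1-2*e)) - log 2 8"
    using Zt_pos by (intro log_divide_pos) auto
  ultimately have "log 2 (e^4 + (1-e)^4) = log 2 (Zt (1-2*e)) - log 2 8" by (simp only:)
  moreover have "log 2 (8::real) = 3"
  proof -
    have "(8::real) = 2 ^ 3" by simp
    thus ?thesis using log_pow_cancel[of "2::real" 3] by simp
  qed
  ultimately show ?thesis unfolding g_def lambda4_def Gt_def by (simp add: algebra_simps)
qed

lemma eqn_eq:
  assumes "0 \<le> e" "e < 1/2"
  shows "(1/2 - e) * (((1 - e) ^ 3 - e ^ 3) / ((1 - e) ^ 4 + e ^ 4)) = Phi (1 - 2*e)"
proof -
  have d: "(1 - e) ^ 4 + e ^ 4 = Zt (1-2*e) / 8" unfolding Zt_def by (simp add: algebra_simps power2_eq_square power4_eq_xxxx)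
  have "Zt (1-2*e) \<noteq> 0" using Zt_pos[of "1-2*e"] by simp
  thus ?thesis unfolding d Phi_def
    by (simp add: field_simps) (simp add: algebra_simps power2_eq_square power3_eq_cube power4_eq_xxxx)
qed

lemma Gt_deriv:
  assumes "t > 0"
  shows "(Gt \<gamma> has_real_derivative (4 / (t * ln 2)) * (Phi t - \<gamma>)) (at t)"
proof -
  have Z: "Zt t > 0" by (rule Zt_pos)
  have eq: "Gt \<gamma> = (\<lambda>t. ln (1 + 6*t^2 + t^4) / ln 2 - 4*\<gamma>*(ln t / ln 2))"
    unfolding Gt_def Zt_def log_def by auto
  have "((\<lambda>t. ln (1 + 6*t^2 + t^4) / ln 2 - 4*\<gamma>*(ln t / ln 2)) has_real_derivative
     ((12*t + 4*t^3) / (1 + 6*t^2 + t^4)) / ln 2 - 4*\<gamma>*((1/t)/ln 2)) (at t)"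
    using assms Z unfolding Zt_def
    by (auto intro!: derivative_eq_intros simp: power2_eq_square power3_eq_cube)
  moreover have "((12*t + 4*t^3) / (1 + 6*t^2 + t^4)) / ln 2 - 4*\<gamma>*((1/t)/ln 2)
     = (4 / (t * ln 2)) * (Phi t - \<gamma>)"
  proof -
    have a: "(12*t + 4*t^3) = (4/t) * (3*t^2+t^4)" using assms
      by (simp add: field_simps power2_eq_square power3_eq_cube power4_eq_xxxx)
    have b: "(4/t*P)/Z/L - 4*\<gamma>*(1/t/L) = 4/(t*L)*(P/Z - \<gamma>)" if "Z > 0" "L > 0" for P Z L
      using that assms by (simp add: field_simps)
    show ?thesis unfolding Phi_def a using b[of "Zt t" "ln 2" "3*t^2+t^4"] Z unfolding Zt_def by simp
  qed
  ultimately show ?thesis using eq by simp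
qed

lemma Gt_cont: "0 < a \<Longrightarrow> continuous_on {a..b} (Gt \<gamma>)"
  by (intro continuous_at_imp_continuous_on ballI DERIV_isCont[OF Gt_deriv]) auto

lemma Gt_inc:
  assumes "Phi t0 = \<gamma>" "0 < t0" "t0 \<le> a" "a < b" shows "Gt \<gamma> a < Gt \<gamma> b"
proof (rule DERIV_pos_imp_increasing_open[OF assms(4)])
  fix x assume x: "a < x" "x < b"
  have "Phi x > \<gamma>" using Phi_mono[of t0 x] assms x by auto
  hence "4 / (x * ln 2) * (Phi x - \<gamma>) > 0" using x assms by (intro mult_pos_pos) auto
  thus "\<exists>y. (Gt \<gamma> has_real_derivative y) (at x) \<and> 0 < y" using Gt_deriv[of x \<gamma>] x assms by auto
qed (use Gt_cont assms in auto)

lemma Gt_dec: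
  assumes "Phi t0 = \<gamma>" "0 < a" "a < b" "b \<le> t0" shows "Gt \<gamma> b < Gt \<gamma> a"
proof (rule DERIV_neg_imp_decreasing_open[OF assms(3)])
  fix x assume x: "a < x" "x < b"
  have "Phi x < \<gamma>" using Phi_mono[of x t0] assms x by auto
  hence "4 / (x * ln 2) * (Phi x - \<gamma>) < 0" using x assms by (intro mult_pos_neg) auto
  thus "\<exists>y. (Gt \<gamma> has_real_derivative y) (at x) \<and> y < 0" using Gt_deriv[of x \<gamma>] x assms by auto
qed (use Gt_cont assms in auto)

type_synonym pat = "bool \<times> bool \<times> bool \<times> bool"

definition wt :: "pat \<Rightarrow> nat" where
  "wt p = (case p of (a,b,c,d) \<Rightarrow> of_bool a + of_bool b + of_bool c + of_bool d)"

definition PP :: "pat set" where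
  "PP = {(False,False,False,False), (True,True,False,False), (True,False,True,False),
         (True,False,False,True), (False,True,True,False), (False,True,False,True),
         (False,False,True,True), (True,True,True,True)}"

lemma sum_PP: "(\<Sum>p\<in>PP. (t::real) ^ wt p) = Zt t"
  unfolding PP_def Zt_def by (simp add: wt_def power2_eq_square power4_eq_xxxx)

definition enc :: "nat \<Rightarrow> nat set \<times> nat set \<times> nat set \<times> nat set \<Rightarrow> nat \<Rightarrow> pat" where
  "enc n w = (\<lambda>i. if i < n then (case w of (a,b,c,d) \<Rightarrow> (i\<in>a,i\<in>b,i\<in>c,i\<in>d)) else undefined)"

definition CS :: "nat \<Rightarrow> nat \<Rightarrow> (nat set \<times> nat set \<times> nat set \<times> nat set) set" where
  "CS n i = {(u1, u2, u3, u4). u1 \<in> layer n i \<and> u2 \<in> layer n i \<and>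
      u3 \<in> layer n i \<and> u4 \<in> layer n i \<and> vadd (vadd (vadd u1 u2) u3) u4 = {}}"

lemma count4_CS: "count4 n i = card (CS n i)"
  unfolding count4_def CS_def ..

lemma CS_sub: "CS n i \<subseteq> Pow {..<n} \<times> Pow {..<n} \<times> Pow {..<n} \<times> Pow {..<n}"
  unfolding CS_def layer_def by auto

lemma finite_CS: "finite (CS n i)"
  by (rule finite_subset[OF CS_sub]) auto

lemma enc_in: "w \<in> CS n i \<Longrightarrow> enc n w \<in> PiE {..<n} (\<lambda>_. PP)"
  unfolding CS_def enc_def PP_def vadd_def PiE_def extensional_def
  by (auto split: prod.splits)

lemma enc_inj: "inj_on (enc n) (CS n i)"
proof (rule inj_onI)
  fix w w' assume w: "w \<in> CS n i" and w': "w' \<in> CS n i" and e: "enc n w = enc n w'"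
  obtain a b c d where wd: "w = (a,b,c,d)" by (cases w) auto
  obtain a' b' c' d' where wd': "w' = (a',b',c',d')" by (cases w') auto
  have sub: "a \<subseteq> {..<n}" "b \<subseteq> {..<n}" "c \<subseteq> {..<n}" "d \<subseteq> {..<n}"
            "a' \<subseteq> {..<n}" "b' \<subseteq> {..<n}" "c' \<subseteq> {..<n}" "d' \<subseteq> {..<n}"
    using w w' wd wd' unfolding CS_def layer_def by auto
  have m: "(x\<in>a) = (x\<in>a') \<and> (x\<in>b) = (x\<in>b') \<and> (x\<in>c) = (x\<in>c') \<and> (x\<in>d) = (x\<in>d')" if "x < n" for x
    using fun_cong[OF e, of x] that wd wd' unfolding enc_def by simp
  have "a = a'" "b = b'" "c = c'" "d = d'" using m sub by (auto; blast)+
  thus "w = w'" using wd wd' by simp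
qed

lemma wt_sum:
  assumes "w \<in> CS n i" shows "(\<Sum>x<n. wt (enc n w x)) = 4 * i"
proof -
  obtain a b c d where wd: "w = (a,b,c,d)" by (cases w) auto
  have sub: "a \<subseteq> {..<n}" "b \<subseteq> {..<n}" "c \<subseteq> {..<n}" "d \<subseteq> {..<n}"
    and cd: "card a = i" "card b = i" "card c = i" "card d = i"
    using assms wd unfolding CS_def layer_def by auto
  have "(\<Sum>x<n. wt (enc n w x)) = (\<Sum>x<n. of_bool (x\<in>a) + of_bool (x\<in>b) + of_bool (x\<in>c) + of_bool (x\<in>d))"
    unfolding enc_def wt_def wd by (intro sum.cong) auto
  also have "\<dots> = (\<Sum>x<n. of_bool (x\<in>a)) + (\<Sum>x<n. of_bool (x\<in>b)) + (\<Sum>x<n. of_bool (x\<in>c)) + (\<Sum>x<n. of_bool (x\<in>d))"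
    by (simp add: sum.distrib)
  also have "\<dots> = card ({..<n} \<inter> a) + card ({..<n} \<inter> b) + card ({..<n} \<inter> c) + card ({..<n} \<inter> d)"
    by (simp add: Collect_mem_eq)
  also have "\<dots> = 4 * i" using sub cd by (simp add: Int_absorb1)
  finally show ?thesis .
qed

lemma upper_count:
  assumes "t > 0"
  shows "real (count4 n i) * t ^ (4*i) \<le> Zt t ^ n"
proof -
  define f where "f = (\<lambda>g. \<Prod>x<n. t ^ wt (g x))"
  have "real (count4 n i) * t ^ (4*i) = (\<Sum>w\<in>CS n i. t ^ (4*i))"
    by (simp add: count4_CS)
  also have "\<dots> = (\<Sum>w\<in>CS n i. f (enc n w))"
    unfolding f_def by (intro sum.cong refl) (simp add: power_sum[symmetric] wt_sum)
  also have "\<dots> = (\<Sum>g\<in>enc n ` CS n i. f g)"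
    by (rule sum.reindex[OF enc_inj, symmetric, unfolded comp_def])
  also have "\<dots> \<le> (\<Sum>g\<in>PiE {..<n} (\<lambda>_. PP). f g)"
    apply (rule sum_mono2)
    subgoal by (rule finite_PiE) (auto simp: PP_def)
    subgoal by (rule image_subsetI, rule enc_in)
    subgoal unfolding f_def using assms by (auto intro: prod_nonneg)
    done
  also have "\<dots> = (\<Prod>x<n. \<Sum>p\<in>PP. t ^ wt p)"
    unfolding f_def by (rule prod_sum_PiE[symmetric]) (auto simp: PP_def)
  also have "\<dots> = Zt t ^ n" by (simp add: sum_PP)
  finally show ?thesis .
qed

fun fams :: "nat set \<Rightarrow> nat list \<Rightarrow> nat set list set" where
  "fams S [] = {[]}"
| "fams S (m#ms) = (\<Union>X\<in>{X. X \<subseteq> S \<and> card X = m}. (#) X ` fams (S - X) ms)"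

fun cnt :: "nat \<Rightarrow> nat list \<Rightarrow> nat" where
  "cnt N [] = 1"
| "cnt N (m#ms) = (N choose m) * cnt (N - m) ms"

lemma fams_Cons_iff: "Xs \<in> fams S (m#ms) \<longleftrightarrow> (\<exists>X Ys. Xs = X # Ys \<and> X \<subseteq> S \<and> card X = m \<and> Ys \<in> fams (S - X) ms)"
  by auto

lemma finite_fams: "finite S \<Longrightarrow> finite (fams S ms)"
proof (induction ms arbitrary: S)
  case (Cons m ms)
  have "finite {X. X \<subseteq> S \<and> card X = m}" using Cons.prems by auto
  thus ?case using Cons by auto
qed simp

lemma card_fams: "finite S \<Longrightarrow> card (fams S ms) = cnt (card S) ms"
proof (induction ms arbitrary: S)
  case Nil thus ?case by simp
next
  case (Cons m ms)
  have fin: "finite {X. X \<subseteq> S \<and> card X = m}" using Cons.prems by auto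
  have "card (fams S (m#ms)) = (\<Sum>X\<in>{X. X \<subseteq> S \<and> card X = m}. card ((#) X ` fams (S - X) ms))"
    unfolding fams.simps
    by (rule card_UN_disjoint[OF fin]) (use Cons.prems finite_fams in auto)
  also have "\<dots> = (\<Sum>X\<in>{X. X \<subseteq> S \<and> card X = m}. cnt (card S - m) ms)"
  proof (rule sum.cong[OF refl])
    fix X assume X: "X \<in> {X. X \<subseteq> S \<and> card X = m}"
    have "card ((#) X ` fams (S - X) ms) = card (fams (S - X) ms)"
      by (rule card_image) (auto intro: inj_onI)
    also have "\<dots> = cnt (card (S - X)) ms" using Cons.IH Cons.prems by auto
    also have "card (S - X) = card S - m" using X Cons.prems by (metis (mono_tags) mem_Collect_eq card_Diff_subset finite_subset)
    finally show "card ((#) X ` fams (S - X) ms) = cnt (card S - m) ms" .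
  qed
  also have "\<dots> = (card S choose m) * cnt (card S - m) ms"
    using n_subsets[OF Cons.prems] by simp
  finally show ?case by simp
qed

lemma cnt_fact: "sum_list ms \<le> N \<Longrightarrow>
  real (cnt N ms) = fact N / ((\<Prod>m\<leftarrow>ms. fact m) * fact (N - sum_list ms))"
proof (induction ms arbitrary: N)
  case Nil thus ?case by simp
next
  case (Cons m ms)
  have mN: "m \<le> N" and r: "sum_list ms \<le> N - m" using Cons.prems by auto
  have "real (cnt N (m#ms)) = real (N choose m) * real (cnt (N - m) ms)" by simp
  also have "\<dots> = fact N / (fact m * fact (N - m)) * (fact (N - m) / ((\<Prod>m\<leftarrow>ms. fact m) * fact (N - m - sum_list ms)))"
    using binomial_fact[OF mN, where 'a=real] Cons.IH[OF r] by simp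
  also have "\<dots> = fact N / ((\<Prod>m\<leftarrow>m#ms. fact m) * fact (N - sum_list (m#ms)))"
    by (simp add: field_simps)
  finally show ?case .
qed

lemma vadd_mem: "x \<in> vadd X Y \<longleftrightarrow> (x\<in>X) \<noteq> (x\<in>Y)"
  unfolding vadd_def by auto

definition D7 :: "nat set \<Rightarrow> nat set \<Rightarrow> nat set \<Rightarrow> nat set \<Rightarrow> nat set \<Rightarrow> nat set \<Rightarrow> nat set \<Rightarrow> bool" where
  "D7 A B1 B2 B3 B4 B5 B6 \<longleftrightarrow>
    A \<inter> B1 = {} \<and> A \<inter> B2 = {} \<and> A \<inter> B3 = {} \<and> A \<inter> B4 = {} \<and> A \<inter> B5 = {} \<and> A \<inter> B6 = {} \<and>
    B1 \<inter> B2 = {} \<and> B1 \<inter> B3 = {} \<and> B1 \<inter> B4 = {} \<and> B1 \<inter> B5 = {} \<and> B1 \<inter> B6 = {} \<and>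
    B2 \<inter> B3 = {} \<and> B2 \<inter> B4 = {} \<and> B2 \<inter> B5 = {} \<and> B2 \<inter> B6 = {} \<and>
    B3 \<inter> B4 = {} \<and> B3 \<inter> B5 = {} \<and> B3 \<inter> B6 = {} \<and>
    B4 \<inter> B5 = {} \<and> B4 \<inter> B6 = {} \<and> B5 \<inter> B6 = {}"

definition tup :: "nat set list \<Rightarrow> nat set \<times> nat set \<times> nat set \<times> nat set" where
  "tup Xs = (let A = Xs!0; B1 = Xs!1; B2 = Xs!2; B3 = Xs!3; B4 = Xs!4; B5 = Xs!5; B6 = Xs!6 in
     (A \<union> B1 \<union> B2 \<union> B3, A \<union> B1 \<union> B4 \<union> B5, A \<union> B2 \<union> B4 \<union> B6, A \<union> B3 \<union> B5 \<union> B6))"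

declare fams.simps(2)[simp del]

lemma fams7:
  assumes "Xs \<in> fams S [a,b,b,b,b,b,b]"
  obtains A B1 B2 B3 B4 B5 B6 where "Xs = [A,B1,B2,B3,B4,B5,B6]"
    "A \<subseteq> S" "B1 \<subseteq> S" "B2 \<subseteq> S" "B3 \<subseteq> S" "B4 \<subseteq> S" "B5 \<subseteq> S" "B6 \<subseteq> S"
    "card A = a" "card B1 = b" "card B2 = b" "card B3 = b" "card B4 = b" "card B5 = b" "card B6 = b"
    "D7 A B1 B2 B3 B4 B5 B6"
proof -
  from assms obtain A B1 B2 B3 B4 B5 B6 where "Xs = [A,B1,B2,B3,B4,B5,B6]"
    "A \<subseteq> S" "B1 \<subseteq> S - A" "B2 \<subseteq> S - A - B1" "B3 \<subseteq> S - A - B1 - B2"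
    "B4 \<subseteq> S - A - B1 - B2 - B3" "B5 \<subseteq> S - A - B1 - B2 - B3 - B4" "B6 \<subseteq> S - A - B1 - B2 - B3 - B4 - B5"
    "card A = a" "card B1 = b" "card B2 = b" "card B3 = b" "card B4 = b" "card B5 = b" "card B6 = b"
    unfolding fams_Cons_iff by auto
  moreover have "D7 A B1 B2 B3 B4 B5 B6"
    unfolding D7_def using calculation(3-8) by (intro conjI; blast)
  ultimately show ?thesis by (intro that) auto
qed

lemma tup_in:
  assumes "Xs \<in> fams {..<n} [a,b,b,b,b,b,b]" shows "tup Xs \<in> CS n (a + 3*b)"
proof -
  obtain A B1 B2 B3 B4 B5 B6 where H: "Xs = [A,B1,B2,B3,B4,B5,B6]"
    "A \<subseteq> {..<n}" "B1 \<subseteq> {..<n}" "B2 \<subseteq> {..<n}" "B3 \<subseteq> {..<n}" "B4 \<subseteq> {..<n}" "B5 \<subseteq> {..<n}" "B6 \<subseteq> {..<n}"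
    "card A = a" "card B1 = b" "card B2 = b" "card B3 = b" "card B4 = b" "card B5 = b" "card B6 = b"
    "D7 A B1 B2 B3 B4 B5 B6"
    by (rule fams7[OF assms])
  note D = H(16)[unfolded D7_def]
  have fin: "finite A" "finite B1" "finite B2" "finite B3" "finite B4" "finite B5" "finite B6"
    using H finite_subset by blast+
  have c4: "card (P \<union> Q \<union> R \<union> T) = card P + card Q + card R + card T"
    if "finite P" "finite Q" "finite R" "finite T" "P \<inter> Q = {}" "P \<inter> R = {}" "P \<inter> T = {}"
       "Q \<inter> R = {}" "Q \<inter> T = {}" "R \<inter> T = {}" for P Q R T :: "nat set"
  proof -
    have "card (P \<union> Q \<union> R \<union> T) = card (P \<union> Q \<union> R) + card T"
      using that by (intro card_Un_disjoint) auto
    also have "card (P \<union> Q \<union> R) = card (P \<union> Q) + card R"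
      using that by (intro card_Un_disjoint) auto
    also have "card (P \<union> Q) = card P + card Q"
      using that by (intro card_Un_disjoint) auto
    finally show ?thesis .
  qed
  have l1: "A \<union> B1 \<union> B2 \<union> B3 \<in> layer n (a + 3*b)"
    unfolding layer_def using H D fin c4[of A B1 B2 B3] by auto
  have l2: "A \<union> B1 \<union> B4 \<union> B5 \<in> layer n (a + 3*b)"
    unfolding layer_def using H D fin c4[of A B1 B4 B5] by auto
  have l3: "A \<union> B2 \<union> B4 \<union> B6 \<in> layer n (a + 3*b)"
    unfolding layer_def using H D fin c4[of A B2 B4 B6] by auto
  have l4: "A \<union> B3 \<union> B5 \<union> B6 \<in> layer n (a + 3*b)"
    unfolding layer_def using H D fin c4[of A B3 B5 B6] by auto
  have z: "vadd (vadd (vadd (A \<union> B1 \<union> B2 \<union> B3) (A \<union> B1 \<union> B4 \<union> B5)) (A \<union> B2 \<union> B4 \<union> B6)) (A \<union> B3 \<union> B5 \<union> B6) = {}"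
  proof (rule equals0I)
    fix x assume "x \<in> vadd (vadd (vadd (A \<union> B1 \<union> B2 \<union> B3) (A \<union> B1 \<union> B4 \<union> B5)) (A \<union> B2 \<union> B4 \<union> B6)) (A \<union> B3 \<union> B5 \<union> B6)"
    thus False using D unfolding vadd_mem disjoint_iff Un_iff
      by (cases "x \<in> A"; cases "x \<in> B1"; cases "x \<in> B2"; cases "x \<in> B3"; cases "x \<in> B4"; cases "x \<in> B5"; cases "x \<in> B6") auto
  qed
  show ?thesis unfolding CS_def tup_def using H(1) l1 l2 l3 l4 z by simp
qed

lemma tup_inj: "inj_on tup (fams {..<n} [a,b,b,b,b,b,b])"
proof (rule inj_onI)
  fix Xs Ys assume X: "Xs \<in> fams {..<n} [a,b,b,b,b,b,b]" and Y: "Ys \<in> fams {..<n} [a,b,b,b,b,b,b]"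
    and e: "tup Xs = tup Ys"
  have rec: "Xs = (case tup Xs of (u1,u2,u3,u4) \<Rightarrow> [u1 \<inter> u2 \<inter> u3, (u1 \<inter> u2) - u3, (u1 \<inter> u3) - u2,
      (u1 \<inter> u4) - u2, (u2 \<inter> u3) - u1, (u2 \<inter> u4) - u1, (u3 \<inter> u4) - u1])"
    if Xm: "Xs \<in> fams {..<n} [a,b,b,b,b,b,b]" for Xs
  proof -
    obtain A B1 B2 B3 B4 B5 B6 where H: "Xs = [A,B1,B2,B3,B4,B5,B6]"
      "D7 A B1 B2 B3 B4 B5 B6"
      using fams7[OF Xm] by metis
    note D = H(2)[unfolded D7_def]
    have e1: "(A \<union> B1 \<union> B2 \<union> B3) \<inter> (A \<union> B1 \<union> B4 \<union> B5) \<inter> (A \<union> B2 \<union> B4 \<union> B6) = A"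
    proof (rule set_eqI)
      fix x show "x \<in> (A \<union> B1 \<union> B2 \<union> B3) \<inter> (A \<union> B1 \<union> B4 \<union> B5) \<inter> (A \<union> B2 \<union> B4 \<union> B6) \<longleftrightarrow> x \<in> A"
        using D unfolding disjoint_iff by (auto simp: Un_iff Int_iff Diff_iff)
    qed
    have e2: "(A \<union> B1 \<union> B2 \<union> B3) \<inter> (A \<union> B1 \<union> B4 \<union> B5) - (A \<union> B2 \<union> B4 \<union> B6) = B1"
    proof (rule set_eqI)
      fix x show "x \<in> (A \<union> B1 \<union> B2 \<union> B3) \<inter> (A \<union> B1 \<union> B4 \<union> B5) - (A \<union> B2 \<union> B4 \<union> B6) \<longleftrightarrow> x \<in> B1"
        using D unfolding disjoint_iff by (auto simp: Un_iff Int_iff Diff_iff)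
    qed
    have e3: "(A \<union> B1 \<union> B2 \<union> B3) \<inter> (A \<union> B2 \<union> B4 \<union> B6) - (A \<union> B1 \<union> B4 \<union> B5) = B2"
    proof (rule set_eqI)
      fix x show "x \<in> (A \<union> B1 \<union> B2 \<union> B3) \<inter> (A \<union> B2 \<union> B4 \<union> B6) - (A \<union> B1 \<union> B4 \<union> B5) \<longleftrightarrow> x \<in> B2"
        using D unfolding disjoint_iff by (auto simp: Un_iff Int_iff Diff_iff)
    qed
    have e4: "(A \<union> B1 \<union> B2 \<union> B3) \<inter> (A \<union> B3 \<union> B5 \<union> B6) - (A \<union> B1 \<union> B4 \<union> B5) = B3"
    proof (rule set_eqI)
      fix x show "x \<in> (A \<union> B1 \<union> B2 \<union> B3) \<inter> (A \<union> B3 \<union> B5 \<union> B6) - (A \<union> B1 \<union> B4 \<union> B5) \<longleftrightarrow> x \<in> B3"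
        using D unfolding disjoint_iff by (auto simp: Un_iff Int_iff Diff_iff)
    qed
    have e5: "(A \<union> B1 \<union> B4 \<union> B5) \<inter> (A \<union> B2 \<union> B4 \<union> B6) - (A \<union> B1 \<union> B2 \<union> B3) = B4"
    proof (rule set_eqI)
      fix x show "x \<in> (A \<union> B1 \<union> B4 \<union> B5) \<inter> (A \<union> B2 \<union> B4 \<union> B6) - (A \<union> B1 \<union> B2 \<union> B3) \<longleftrightarrow> x \<in> B4"
        using D unfolding disjoint_iff by (auto simp: Un_iff Int_iff Diff_iff)
    qed
    have e6: "(A \<union> B1 \<union> B4 \<union> B5) \<inter> (A \<union> B3 \<union> B5 \<union> B6) - (A \<union> B1 \<union> B2 \<union> B3) = B5"
    proof (rule set_eqI)
      fix x show "x \<in> (A \<union> B1 \<union> B4 \<union> B5) \<inter> (A \<union> B3 \<union> B5 \<union> B6) - (A \<union> B1 \<union> B2 \<union> B3) \<longleftrightarrow> x \<in> B5"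
        using D unfolding disjoint_iff by (auto simp: Un_iff Int_iff Diff_iff)
    qed
    have e7: "(A \<union> B2 \<union> B4 \<union> B6) \<inter> (A \<union> B3 \<union> B5 \<union> B6) - (A \<union> B1 \<union> B2 \<union> B3) = B6"
    proof (rule set_eqI)
      fix x show "x \<in> (A \<union> B2 \<union> B4 \<union> B6) \<inter> (A \<union> B3 \<union> B5 \<union> B6) - (A \<union> B1 \<union> B2 \<union> B3) \<longleftrightarrow> x \<in> B6"
        using D unfolding disjoint_iff by (auto simp: Un_iff Int_iff Diff_iff)
    qed
    show ?thesis unfolding tup_def using H(1) e1 e2 e3 e4 e5 e6 e7 by simp
  qed
  show "Xs = Ys" using rec[OF X] rec[OF Y] e by simp
qed

lemma lower_count:
  assumes "a + 6*b \<le> n"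
  shows "fact n / (fact a * fact b ^ 6 * fact (n - a - 6*b)) \<le> real (count4 n (a + 3*b))"
proof -
  have "card (fams {..<n} [a,b,b,b,b,b,b]) = card (tup ` fams {..<n} [a,b,b,b,b,b,b])"
    by (rule card_image[OF tup_inj, symmetric])
  also have "\<dots> \<le> card (CS n (a + 3*b))"
    by (intro card_mono finite_CS image_subsetI tup_in)
  finally have "cnt n [a,b,b,b,b,b,b] \<le> count4 n (a + 3*b)"
    by (simp only: count4_CS card_fams finite_lessThan card_lessThan)
  moreover have "real (cnt n [a,b,b,b,b,b,b]) = fact n / (fact a * fact b ^ 6 * fact (n - a - 6*b))"
  proof -
    have p: "(\<Prod>m\<leftarrow>[a,b,b,b,b,b,b]. fact m) = (fact a * fact b ^ 6 :: real)"
      by (simp add: eval_nat_numeral)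
    have q: "sum_list [a,b,b,b,b,b,b] = a + 6*b" by simp
    show ?thesis using cnt_fact[of "[a,b,b,b,b,b,b]" n] assms unfolding p q by simp
  qed
  ultimately show ?thesis by (metis of_nat_le_iff)
qed

lemma lnfact_lower: "real n * ln (real n) - real n \<le> ln (fact n)"
proof (induction n)
  case 0 thus ?case by simp
next
  case (Suc n)
  show ?case
  proof (cases "n = 0")
    case True thus ?thesis by simp
  next
    case False
    hence np: "real n > 0" by simp
    have l1: "ln (1 + 1/real n) \<le> 1/real n" using np by (intro ln_add_one_self_le_self) auto
    have "1 + 1/real n = (real n + 1)/real n" using np by (simp add: field_simps)
    hence "ln (1 + 1/real n) = ln (real n + 1) - ln (real n)" using np by (simp add: ln_div)
    hence l: "ln (real n + 1) = ln (real n) + ln (1 + 1/real n)" by linarith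
    have "real n * ln (1 + 1/real n) \<le> real n * (1/real n)" using l1 np by (intro mult_left_mono) auto
    hence l2: "real n * ln (1 + 1/real n) \<le> 1" using np by simp
    have f: "ln (fact (Suc n) :: real) = ln (real n + 1) + ln (fact n)"
      by (simp add: ln_mult add.commute)
    have e: "real (Suc n) = real n + 1" by simp
    have m1: "real n * ln (real n + 1) = real n * ln (real n) + real n * ln (1 + 1/real n)"
      unfolding l by (simp only: distrib_left)
    have m2: "(real n + 1) * ln (real n + 1) = real n * ln (real n + 1) + ln (real n + 1)"
      by (simp only: distrib_right mult_1)
    show ?thesis unfolding e f using m1 m2 Suc.IH l2 by linarith
  qed
qed

lemma lnfact_upper: "ln (fact m) \<le> (real m + 1) * ln (real m + 1) - real m"
proof (induction m)
  case 0 thus ?case by simp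
next
  case (Suc m)
  have p1: "real m + 1 > 0" "real m + 2 > 0" by auto
  have "ln ((real m + 1) / (real m + 2)) \<le> (real m + 1) / (real m + 2) - 1"
    using p1 by (intro ln_le_minus_one) auto
  also have "\<dots> = - 1 / (real m + 2)" using p1 by (simp add: field_simps)
  finally have "ln (real m + 1) - ln (real m + 2) \<le> - 1 / (real m + 2)"
    using p1 by (simp add: ln_div)
  hence "(real m + 2) * (ln (real m + 1) - ln (real m + 2)) \<le> (real m + 2) * (- 1 / (real m + 2))"
    using p1 by (intro mult_left_mono) auto
  hence key: "(real m + 2) * ln (real m + 1) \<le> (real m + 2) * ln (real m + 2) - 1"
    using p1 by (simp add: algebra_simps)
  have f: "ln (fact (Suc m) :: real) = ln (real m + 1) + ln (fact m)"
    by (simp add: ln_mult add.commute)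
  have e: "real (Suc m) + 1 = real m + 2" by simp
  show ?case unfolding f e using Suc.IH key by (simp add: algebra_simps)
qed

lemma floor_lim:
  assumes "(y::real) \<ge> 0"
  shows "(\<lambda>n. real (nat \<lfloor>y * real n\<rfloor>) / real n) \<longlonglongrightarrow> y"
proof (rule tendsto_sandwich[of "\<lambda>n. y - 1 / real n" _ _ "\<lambda>_. y"])
  have b: "y * real n - 1 \<le> real (nat \<lfloor>y * real n\<rfloor>) \<and> real (nat \<lfloor>y * real n\<rfloor>) \<le> y * real n" for n
  proof -
    have "\<lfloor>y * real n\<rfloor> \<ge> 0" using assms by simp
    hence "real (nat \<lfloor>y * real n\<rfloor>) = of_int \<lfloor>y * real n\<rfloor>" by simp
    thus ?thesis by linarith
  qed
  have c1: "y - 1/x \<le> r/x" if "y*x - 1 \<le> r" "x > 0" for r x :: real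
  proof -
    have "y - 1/x = (y*x - 1)/x" using that by (simp add: field_simps)
    also have "\<dots> \<le> r/x" using that by (intro divide_right_mono) auto
    finally show ?thesis .
  qed
  have c2: "r/x \<le> y" if "r \<le> y*x" "x > 0" for r x :: real
    using that by (simp add: field_simps)
  show "\<forall>\<^sub>F n in sequentially. y - 1 / real n \<le> real (nat \<lfloor>y * real n\<rfloor>) / real n"
    using eventually_gt_at_top[of 0]
  proof eventually_elim
    case (elim n) thus ?case using b[of n] by (intro c1) auto
  qed
  show "\<forall>\<^sub>F n in sequentially. real (nat \<lfloor>y * real n\<rfloor>) / real n \<le> y"
    using eventually_gt_at_top[of 0]
  proof eventually_elim
    case (elim n) thus ?case using b[of n] by (intro c2) auto
  qed
  show "(\<lambda>n. y - 1 / real n) \<longlonglongrightarrow> y"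
    using tendsto_diff[OF tendsto_const lim_const_over_n[of 1]] by simp
qed simp

lemma xlnx_split:
  fixes n m :: real
  assumes "n > 0" "m \<ge> 0"
  shows "(m + 1) * ln (m + 1) = n * (((m + 1) / n) * ln ((m + 1) / n)) + (m + 1) * ln n"
proof -
  have a: "ln ((m + 1) / n) = ln (m + 1) - ln n" using assms by (intro ln_divide_pos) auto
  have "n * (((m + 1) / n) * ln ((m + 1) / n)) = (m + 1) * ln ((m + 1) / n)" using assms by simp
  also have "\<dots> = (m + 1) * (ln (m + 1) - ln n)" unfolding a ..
  finally show ?thesis by (simp add: algebra_simps)
qed

lemma lin_aux:
  fixes lC lF NL N Pa Pb Pc a b c Xa Xb Xc Qa Qb Qc E :: real
  assumes "lF \<le> lC" "NL - N - (Pa - a) - 6 * (Pb - b) - (Pc - c) \<le> lF"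
    "Pa = Xa + Qa" "Pb = Xb + Qb" "Pc = Xc + Qc" "Qa + 6 * Qb + Qc = NL + E" "a + 6 * b + c = N"
  shows "- Xa - 6 * Xb - Xc - E \<le> lC"
  using assms by (smt (verit))

lemma main_lim:
  assumes g: "0 < \<gamma>" "\<gamma> < 1/2" and t: "0 < t0" "t0 < 1" "Phi t0 = \<gamma>"
  shows "(\<lambda>n. log 2 (real (count4 n (nat \<lfloor>\<gamma> * real n\<rfloor>))) / real n) \<longlonglongrightarrow> Gt \<gamma> t0"
proof -
  define Z where "Z = Zt t0"
  have Zp: "Z > 0" unfolding Z_def by (rule Zt_pos)
  define pa where "pa = t0^4 / Z"
  define pb where "pb = t0^2 / Z"
  define pc where "pc = 1 / Z"
  have pos: "pa > 0" "pb > 0" "pc > 0" unfolding pa_def pb_def pc_def using Zp t by auto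
  have hsum: "pa + 3*pb = \<gamma>"
  proof -
    have "pa + 3*pb = (3*t0^2 + t0^4) / Z" unfolding pa_def pb_def using Zp by (simp add: field_simps)
    also have "\<dots> = \<gamma>" using t(3) unfolding Phi_def Z_def by simp
    finally show ?thesis .
  qed
  have htot: "pa + 6*pb + pc = 1"
  proof -
    have "pa + 6*pb + pc = (1 + 6*t0^2 + t0^4) / Z" unfolding pa_def pb_def pc_def using Zp by (simp add: field_simps)
    also have "\<dots> = 1" using Zp unfolding Z_def Zt_def by simp
    finally show ?thesis .
  qed
  have pc_eq: "pc = 1 - pa - 6*pb" using htot by simp
  have lt: "ln t0 < 0" using t by simp
  have lpa: "ln pa = 4 * ln t0 - ln Z" unfolding pa_def using Zp t by (simp add: ln_div ln_realpow)
  have lpb: "ln pb = 2 * ln t0 - ln Z" unfolding pb_def using Zp t by (simp add: ln_div ln_realpow)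
  have lpc: "ln pc = - ln Z" unfolding pc_def using Zp by (simp add: ln_div)
  have GtE: "Gt \<gamma> t0 * ln 2 = ln Z - 4 * \<gamma> * ln t0"
    unfolding Gt_def Z_def log_def by (simp add: field_simps)
  have hent: "(- (pa * ln pa) - 6 * (pb * ln pb) - pc * ln pc) / ln 2 = Gt \<gamma> t0"
  proof -
    have "- (pa * ln pa) - 6 * (pb * ln pb) - pc * ln pc = ln Z * (pa + 6*pb + pc) - 4 * ln t0 * (pa + 3*pb)"
      unfolding lpa lpb lpc by (simp add: algebra_simps)
    also have "\<dots> = Gt \<gamma> t0 * ln 2" unfolding htot hsum GtE by simp
    finally show ?thesis by simp
  qed

  define k where "k n = nat \<lfloor>\<gamma> * real n\<rfloor>" for n
  define b where "b n = nat \<lfloor>pb * real n\<rfloor>" for n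
  define a where "a n = k n - 3 * b n" for n
  define c where "c n = n - a n - 6 * b n" for n
  define L where "L n = log 2 (real (count4 n (k n))) / real n" for n
  define xa where "xa n = (real (a n) + 1) / real n" for n
  define xb where "xb n = (real (b n) + 1) / real n" for n
  define xc where "xc n = (real (c n) + 1) / real n" for n
  define low where "low n = (- (xa n * ln (xa n)) - 6 * (xb n * ln (xb n)) - xc n * ln (xc n)
      - 8 * (ln (real n) / real n)) / ln 2" for n

  have kb: "\<gamma> * real n - 1 \<le> real (k n) \<and> real (k n) \<le> \<gamma> * real n" for n
  proof -
    have "\<lfloor>\<gamma> * real n\<rfloor> \<ge> 0" using g by simp
    hence "real (k n) = of_int \<lfloor>\<gamma> * real n\<rfloor>" unfolding k_def by simp
    thus ?thesis by linarith
  qed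
  have bb: "real (b n) \<le> pb * real n" for n
  proof -
    have "\<lfloor>pb * real n\<rfloor> \<ge> 0" using pos by simp
    hence "real (b n) = of_int \<lfloor>pb * real n\<rfloor>" unfolding b_def by simp
    thus ?thesis by linarith
  qed

  define N where "N = nat \<lceil>1 / pa\<rceil> + 1"
  have evP: "\<forall>\<^sub>F n in sequentially. n \<ge> N" by (rule eventually_ge_at_top)
  have Nprop: "n > 0 \<and> 3 * b n \<le> k n \<and> a n + 6 * b n \<le> n \<and> a n + 3 * b n = k n
      \<and> real (a n) = real (k n) - 3 * real (b n) \<and> real (c n) = real n - real (k n) - 3 * real (b n)"
    if "n \<ge> N" for n
  proof -
    have "real n \<ge> real N" using that by simp
    moreover have "real N > 1 / pa" unfolding N_def by linarith
    ultimately have "real n > 1 / pa" by linarith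
    hence npa: "pa * real n > 1" using pos by (simp add: field_simps)
    have n0: "n > 0" using that N_def by simp
    have "3 * real (b n) \<le> 3 * pb * real n" using bb[of n] by simp
    also have "\<dots> = \<gamma> * real n - pa * real n" unfolding hsum[symmetric] by (simp add: algebra_simps)
    also have "\<dots> \<le> real (k n)" using kb[of n] npa by linarith
    finally have r1: "3 * real (b n) \<le> real (k n)" .
    hence n1: "3 * b n \<le> k n" by linarith
    have "real (k n) + 3 * real (b n) \<le> \<gamma> * real n + 3 * pb * real n" using kb[of n] bb[of n] by linarith
    also have "\<dots> = (1 - pc) * real n" unfolding hsum[symmetric] pc_eq by (simp add: algebra_simps)
    also have "\<dots> \<le> real n" using pos by (simp add: algebra_simps)
    finally have "k n + 3 * b n \<le> n" by linarith
    hence n2: "a n + 6 * b n \<le> n" unfolding a_def using n1 by linarith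
    have n3: "a n + 3 * b n = k n" unfolding a_def using n1 by simp
    have n4: "real (a n) = real (k n) - 3 * real (b n)" unfolding a_def using n1 by (simp add: of_nat_diff)
    have n5: "real (c n) = real n - real (k n) - 3 * real (b n)" unfolding c_def using n2 n3
      by (simp add: of_nat_diff)
    show ?thesis using n0 n1 n2 n3 n4 n5 by blast
  qed

  
  have Klim: "(\<lambda>n. real (k n) / real n) \<longlonglongrightarrow> \<gamma>" unfolding k_def using floor_lim[of \<gamma>] g by simp
  have Blim: "(\<lambda>n. real (b n) / real n) \<longlonglongrightarrow> pb" unfolding b_def using floor_lim[of pb] pos by simp
  have I: "(\<lambda>n. 1 / real n) \<longlonglongrightarrow> (0::real)" by (rule lim_const_over_n)
  have xa_lim: "xa \<longlonglongrightarrow> pa"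
  proof -
    have "(\<lambda>n. real (k n) / real n - 3 * (real (b n) / real n) + 1 / real n) \<longlonglongrightarrow> \<gamma> - 3 * pb + 0"
      by (intro tendsto_intros Klim Blim I)
    moreover have "\<gamma> - 3 * pb + 0 = pa" using hsum by simp
    ultimately have l: "(\<lambda>n. real (k n) / real n - 3 * (real (b n) / real n) + 1 / real n) \<longlonglongrightarrow> pa"
      by metis
    have "\<forall>\<^sub>F n in sequentially. real (k n) / real n - 3 * (real (b n) / real n) + 1 / real n = xa n"
      using evP
    proof eventually_elim
      case (elim n) thus ?case using Nprop[OF elim] unfolding xa_def by (simp add: field_simps)
    qed
    thus ?thesis using l by (rule Lim_transform_eventually[rotated])
  qed
  have xb_lim: "xb \<longlonglongrightarrow> pb"
  proof -
    have "(\<lambda>n. real (b n) / real n + 1 / real n) \<longlonglongrightarrow> pb + 0"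
      by (intro tendsto_intros Blim I)
    moreover have "(\<lambda>n. real (b n) / real n + 1 / real n) = xb"
      unfolding xb_def by (intro ext) (simp add: add_divide_distrib)
    ultimately show ?thesis by simp
  qed
  have xc_lim: "xc \<longlonglongrightarrow> pc"
  proof -
    have "(\<lambda>n. 1 - real (k n) / real n - 3 * (real (b n) / real n) + 1 / real n) \<longlonglongrightarrow> 1 - \<gamma> - 3 * pb + 0"
      by (intro tendsto_intros Klim Blim I)
    moreover have "1 - \<gamma> - 3 * pb + 0 = pc" using hsum htot by simp
    ultimately have l: "(\<lambda>n. 1 - real (k n) / real n - 3 * (real (b n) / real n) + 1 / real n) \<longlonglongrightarrow> pc"
      by metis
    have "\<forall>\<^sub>F n in sequentially. 1 - real (k n) / real n - 3 * (real (b n) / real n) + 1 / real n = xc n"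
      using evP
    proof eventually_elim
      case (elim n)
      hence n0: "real n > 0" and cE: "real (c n) = real n - real (k n) - 3 * real (b n)"
        using Nprop[OF elim] by auto
      show ?case unfolding xc_def cE using n0 by (simp add: field_simps)
    qed
    thus ?thesis using l by (rule Lim_transform_eventually[rotated])
  qed
  have low_lim: "low \<longlonglongrightarrow> Gt \<gamma> t0"
  proof -
    have "low \<longlonglongrightarrow> (- (pa * ln pa) - 6 * (pb * ln pb) - pc * ln pc - 8 * 0) / ln 2"
      unfolding low_def using pos
      by (intro tendsto_intros xa_lim xb_lim xc_lim lim_ln_over_n) auto
    thus ?thesis using hent by simp
  qed

  
  have upper: "\<forall>\<^sub>F n in sequentially. L n \<le> Gt \<gamma> t0"
    and lower: "\<forall>\<^sub>F n in sequentially. low n \<le> L n"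
  proof -
    have both: "low n \<le> L n \<and> L n \<le> Gt \<gamma> t0" if nN: "n \<ge> N" for n
    proof -
      note P = Nprop[OF nN]
      have n0: "real n > 0" using P by simp
      define F where "F = (fact n / (fact (a n) * fact (b n) ^ 6 * fact (n - a n - 6 * b n)) :: real)"
      have Fle: "F \<le> real (count4 n (k n))"
        unfolding F_def using lower_count[of "a n" "b n" n] P by simp
      have Fp: "F > 0" unfolding F_def by simp
      define C where "C = real (count4 n (k n))"
      have Cp: "C > 0" using Fle Fp unfolding C_def by linarith
      have LC: "L n = ln C / (ln 2 * real n)" unfolding L_def C_def log_def by simp
      
      have cdef: "c n = n - a n - 6 * b n" unfolding c_def ..
      have lnF: "ln F = ln (fact n) - ln (fact (a n)) - 6 * ln (fact (b n)) - ln (fact (c n))"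
        unfolding F_def cdef by (simp add: ln_div ln_mult ln_realpow)
      have sumabc: "real (a n) + 6 * real (b n) + real (c n) = real n" using P by simp
      have A1: "ln C \<ge> ln F" using Fle Fp unfolding C_def by simp
      have A2: "ln F \<ge> real n * ln (real n) - real n
          - ((real (a n) + 1) * ln (real (a n) + 1) - real (a n))
          - 6 * ((real (b n) + 1) * ln (real (b n) + 1) - real (b n))
          - ((real (c n) + 1) * ln (real (c n) + 1) - real (c n))"
      proof -
        have u1: "real n * ln (real n) - real n \<le> ln (fact n)" by (rule lnfact_lower)
        have u2: "ln (fact (a n)) \<le> (real (a n) + 1) * ln (real (a n) + 1) - real (a n)" by (rule lnfact_upper)
        have u3: "6 * ln (fact (b n)) \<le> 6 * ((real (b n) + 1) * ln (real (b n) + 1) - real (b n))"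
          using lnfact_upper[of "b n"] by simp
        have u4: "ln (fact (c n)) \<le> (real (c n) + 1) * ln (real (c n) + 1) - real (c n)" by (rule lnfact_upper)
        show ?thesis unfolding lnF using u1 u2 u3 u4 by (smt (verit))
      qed
      have A3: "(real (a n) + 1) * ln (real (a n) + 1) = real n * (xa n * ln (xa n)) + (real (a n) + 1) * ln (real n)"
        unfolding xa_def by (rule xlnx_split) (use n0 in auto)
      have A4: "(real (b n) + 1) * ln (real (b n) + 1) = real n * (xb n * ln (xb n)) + (real (b n) + 1) * ln (real n)"
        unfolding xb_def by (rule xlnx_split) (use n0 in auto)
      have A5: "(real (c n) + 1) * ln (real (c n) + 1) = real n * (xc n * ln (xc n)) + (real (c n) + 1) * ln (real n)"
        unfolding xc_def by (rule xlnx_split) (use n0 in auto)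
      have s8: "(real (a n) + 1) * ln (real n) + 6 * ((real (b n) + 1) * ln (real n)) + (real (c n) + 1) * ln (real n)
          = real n * ln (real n) + 8 * ln (real n)"
      proof -
        have "(real (a n) + 1) * ln (real n) + 6 * ((real (b n) + 1) * ln (real n)) + (real (c n) + 1) * ln (real n)
            = (real (a n) + 6 * real (b n) + real (c n) + 8) * ln (real n)" by (simp add: algebra_simps)
        also have "\<dots> = (real n + 8) * ln (real n)" using sumabc by simp
        finally show ?thesis by (simp add: algebra_simps)
      qed
      define R where "R = - (xa n * ln (xa n)) - 6 * (xb n * ln (xb n)) - xc n * ln (xc n)"
      have "ln C \<ge> - (real n * (xa n * ln (xa n))) - 6 * (real n * (xb n * ln (xb n))) - real n * (xc n * ln (xc n)) - 8 * ln (real n)"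
        by (rule lin_aux[OF A1 A2 A3 A4 A5 s8 sumabc])
      hence B1: "ln C \<ge> real n * R - 8 * ln (real n)" unfolding R_def by (simp add: algebra_simps)
      have "ln C / real n \<ge> (real n * R - 8 * ln (real n)) / real n"
        using B1 n0 by (intro divide_right_mono) auto
      moreover have "(real n * R - 8 * ln (real n)) / real n = R - 8 * (ln (real n) / real n)"
        using n0 by (simp add: field_simps)
      ultimately have B2: "R - 8 * (ln (real n) / real n) \<le> ln C / real n" by simp
      have "(R - 8 * (ln (real n) / real n)) / ln 2 \<le> (ln C / real n) / ln 2"
        using B2 by (intro divide_right_mono) auto
      moreover have "low n = (R - 8 * (ln (real n) / real n)) / ln 2" unfolding low_def R_def ..
      moreover have "L n = (ln C / real n) / ln 2" unfolding LC by simp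
      ultimately have lowb: "low n \<le> L n" by simp
      
      have "C * t0 ^ (4 * k n) \<le> Z ^ n" unfolding C_def Z_def by (rule upper_count) (use t in auto)
      hence "ln (C * t0 ^ (4 * k n)) \<le> ln (Z ^ n)" using Cp t Zp by (subst ln_le_cancel_iff) auto
      hence "ln C + real (4 * k n) * ln t0 \<le> real n * ln Z" using Cp t Zp by (simp add: ln_mult ln_realpow)
      moreover have "real (4 * k n) * ln t0 \<ge> 4 * \<gamma> * real n * ln t0"
      proof -
        have "4 * real (k n) \<le> 4 * \<gamma> * real n" using kb[of n] by simp
        thus ?thesis using lt by (simp add: mult_right_mono_neg)
      qed
      ultimately have "ln C \<le> real n * (ln Z - 4 * \<gamma> * ln t0)" by (simp add: algebra_simps)
      hence "ln C \<le> real n * (Gt \<gamma> t0 * ln 2)" using GtE by simp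
      hence "L n \<le> Gt \<gamma> t0" unfolding LC using n0 by (simp add: field_simps)
      thus ?thesis using lowb by simp
    qed
    show "\<forall>\<^sub>F n in sequentially. L n \<le> Gt \<gamma> t0" using evP by eventually_elim (use both in blast)
    show "\<forall>\<^sub>F n in sequentially. low n \<le> L n" using evP by eventually_elim (use both in blast)
  qed
  have "L \<longlonglongrightarrow> Gt \<gamma> t0"
    by (rule tendsto_sandwich[OF lower upper low_lim tendsto_const])
  thus ?thesis unfolding L_def k_def .
qed

theorem lemma3p1:
  fixes \<gamma> :: real
  assumes "0 < \<gamma>" and "\<gamma> < 1/2"
  shows "\<exists>e0. 0 \<le> e0 \<and> e0 < 1/2
    \<and> \<gamma> = (1/2 - e0) * (((1 - e0) ^ 3 - e0 ^ 3) / ((1 - e0) ^ 4 + e0 ^ 4))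
    \<and> (\<forall>e. 0 \<le> e \<and> e < 1/2 \<and>
          \<gamma> = (1/2 - e) * (((1 - e) ^ 3 - e ^ 3) / ((1 - e) ^ 4 + e ^ 4)) \<longrightarrow> e = e0)
    \<and> (\<forall>e. 0 \<le> e \<and> e < 1/2 \<longrightarrow> g \<gamma> e0 \<le> g \<gamma> e)
    \<and> (\<forall>x y. 0 \<le> x \<and> x < y \<and> y \<le> e0 \<longrightarrow> g \<gamma> y < g \<gamma> x)
    \<and> (\<forall>x y. e0 \<le> x \<and> x < y \<and> y < 1/2 \<longrightarrow> g \<gamma> x < g \<gamma> y)
    \<and> (psi_seq \<gamma> \<longlongrightarrow> g \<gamma> e0 - 2 * h \<gamma>) (int_mult_filter \<gamma>)"
proof -
  obtain t0 where t0: "0 \<le> t0" "t0 \<le> 1" "Phi t0 = \<gamma>"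
    using IVT'[of Phi 0 \<gamma> 1] Phi_cont Phi_0 Phi_1 assms by auto
  have t0p: "0 < t0" using t0 Phi_0 assms by (cases "t0 = 0") auto
  have t01: "t0 < 1" using t0 Phi_1 assms by (cases "t0 = 1") auto
  define e0 where "e0 = (1 - t0) / 2"
  have te: "1 - 2 * e0 = t0" unfolding e0_def by (simp add: field_simps)
  have e0r: "0 \<le> e0" "e0 < 1/2" unfolding e0_def using t0p t01 by auto
  have eq0: "\<gamma> = (1/2 - e0) * (((1 - e0) ^ 3 - e0 ^ 3) / ((1 - e0) ^ 4 + e0 ^ 4))"
    using eqn_eq[OF e0r] te t0(3) by simp
  have uniq: "\<forall>e. 0 \<le> e \<and> e < 1/2 \<and>
          \<gamma> = (1/2 - e) * (((1 - e) ^ 3 - e ^ 3) / ((1 - e) ^ 4 + e ^ 4)) \<longrightarrow> e = e0"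
  proof (intro allI impI)
    fix e assume H: "0 \<le> e \<and> e < 1/2 \<and> \<gamma> = (1/2 - e) * (((1 - e) ^ 3 - e ^ 3) / ((1 - e) ^ 4 + e ^ 4))"
    hence P: "Phi (1 - 2*e) = Phi t0" using eqn_eq[of e] t0(3) by simp
    have "1 - 2*e = t0"
    proof (rule ccontr)
      assume "1 - 2*e \<noteq> t0"
      hence "1 - 2*e < t0 \<or> t0 < 1 - 2*e" by linarith
      thus False using Phi_mono[of "1 - 2*e" t0] Phi_mono[of t0 "1 - 2*e"] H t0p P by auto
    qed
    thus "e = e0" unfolding e0_def by simp
  qed
  have dec: "\<forall>x y. 0 \<le> x \<and> x < y \<and> y \<le> e0 \<longrightarrow> g \<gamma> y < g \<gamma> x"
  proof (intro allI impI)
    fix x y assume H: "0 \<le> x \<and> x < y \<and> y \<le> e0"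
    have "Gt \<gamma> (1 - 2*y) < Gt \<gamma> (1 - 2*x)"
      using Gt_inc[OF t0(3) t0p, of "1 - 2*y" "1 - 2*x"] H te by auto
    thus "g \<gamma> y < g \<gamma> x" using g_eq[of x \<gamma>] g_eq[of y \<gamma>] H e0r by auto
  qed
  have inc: "\<forall>x y. e0 \<le> x \<and> x < y \<and> y < 1/2 \<longrightarrow> g \<gamma> x < g \<gamma> y"
  proof (intro allI impI)
    fix x y assume H: "e0 \<le> x \<and> x < y \<and> y < 1/2"
    have "Gt \<gamma> (1 - 2*x) < Gt \<gamma> (1 - 2*y)"
      using Gt_dec[OF t0(3), of "1 - 2*y" "1 - 2*x"] H te by auto
    thus "g \<gamma> x < g \<gamma> y" using g_eq[of x \<gamma>] g_eq[of y \<gamma>] H e0r by auto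
  qed
  have mn: "\<forall>e. 0 \<le> e \<and> e < 1/2 \<longrightarrow> g \<gamma> e0 \<le> g \<gamma> e"
  proof (intro allI impI)
    fix e :: real assume H: "0 \<le> e \<and> e < 1/2"
    consider "e < e0" | "e = e0" | "e0 < e" by linarith
    thus "g \<gamma> e0 \<le> g \<gamma> e"
    proof cases
      case 1 thus ?thesis using dec H by (metis less_imp_le order_refl)
    next
      case 2 thus ?thesis by simp
    next
      case 3 thus ?thesis using inc H by (metis less_imp_le order_refl)
    qed
  qed
  have lim: "(psi_seq \<gamma> \<longlongrightarrow> g \<gamma> e0 - 2 * h \<gamma>) (int_mult_filter \<gamma>)"
  proof -
    have "(\<lambda>n. log 2 (real (count4 n (nat \<lfloor>\<gamma> * real n\<rfloor>))) / real n) \<longlonglongrightarrow> g \<gamma> e0"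
      using main_lim[OF assms t0p t01 t0(3)] g_eq[OF e0r, of \<gamma>] te by simp
    hence "psi_seq \<gamma> \<longlonglongrightarrow> g \<gamma> e0 - 2 * h \<gamma>"
      unfolding psi_seq_def by (intro tendsto_diff tendsto_const)
    thus ?thesis unfolding int_mult_filter_def by (rule tendsto_mono[rotated]) (rule inf_le1)
  qed
  show ?thesis using e0r eq0 uniq mn dec inc lim by blast
qed

end
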